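(* Let $\mathcal H$ be a separable Hilbert space, $\rho$ a distribution on $(X,Y)\in\mathcal H\times\mathbb R$ with covariance $H=\mathbb E[XX^\top]$ of largest eigenvalue $\lambda_{\max}$, and assume there is $\theta_*\in\mathcal H$ with $\langle\theta_*,X\rangle=Y$ a.s. Assume there is $R\ge0$ with $\mathbb E[\|X\|^2XX^\top]\preccurlyeq RH$. Run SGD $\theta_0=0$, $\theta_{t+1}=\theta_t-\gamma(\langle\theta_t,x_t\rangle-y_t)x_t$ with i.i.d. samples from $\rho$ and constant $\gamma\le(4\lambda_{\max})^{-1}$. Let $f_t=\mathbb E\,\mathcal R(\theta_t)$ with $\mathcal R(\theta)=\tfrac12\mathbb E_\rho(\langle\theta,X\rangle-Y)^2$, and $M_0=\theta_*\theta_*^\top$. Then for all $t\ge1$, $$f_t\le\frac{\operatorname{tr}(M_0)}{4\gamma t}+\gamma R\sum_{k=0}^{t-1}\frac{f_k}{t-k}.$$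
   Context: $\preccurlyeq$ is the Loewner order; $\operatorname{tr}(M_0)=\|\theta_*\|^2$. *)

theory Defs
  imports "HOL-Probability.Probability"
begin

definition cov_op :: "('a::{real_inner,second_countable_topology,complete_space} \<times> real) measure \<Rightarrow> 'a \<Rightarrow> 'a" where
  "cov_op \<rho> v = (\<integral>z. (inner (fst z) v) *\<^sub>R fst z \<partial>\<rho>)"

definition fourth_op :: "('a::{real_inner,second_countable_topology,complete_space} \<times> real) measure \<Rightarrow> 'a \<Rightarrow> 'a" where
  "fourth_op \<rho> v = (\<integral>z. ((norm (fst z))\<^sup>2 * inner (fst z) v) *\<^sub>R fst z \<partial>\<rho>)"

definition loewner_le :: "('a::real_inner \<Rightarrow> 'a) \<Rightarrow> ('a \<Rightarrow> 'a) \<Rightarrow> bool" where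
  "loewner_le A B \<longleftrightarrow> (\<forall>v. inner v (A v) \<le> inner v (B v))"

definition is_eigenvalue :: "('a::real_vector \<Rightarrow> 'a) \<Rightarrow> real \<Rightarrow> bool" where
  "is_eigenvalue A l \<longleftrightarrow> (\<exists>v. v \<noteq> 0 \<and> A v = l *\<^sub>R v)"

definition largest_eigenvalue :: "('a::real_vector \<Rightarrow> 'a) \<Rightarrow> real \<Rightarrow> bool" where
  "largest_eigenvalue A l \<longleftrightarrow> is_eigenvalue A l \<and> (\<forall>m. is_eigenvalue A m \<longrightarrow> m \<le> l)"

definition risk :: "('a::{real_inner,second_countable_topology,complete_space} \<times> real) measure \<Rightarrow> 'a \<Rightarrow> real" where
  "risk \<rho> \<theta> = (1/2) * (\<integral>z. (inner \<theta> (fst z) - snd z)\<^sup>2 \<partial>\<rho>)"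

primrec sgd :: "real \<Rightarrow> (nat \<Rightarrow> 'a::real_inner \<times> real) \<Rightarrow> nat \<Rightarrow> 'a" where
  "sgd \<gamma> zs 0 = 0"
| "sgd \<gamma> zs (Suc t) =
     sgd \<gamma> zs t - (\<gamma> * (inner (sgd \<gamma> zs t) (fst (zs t)) - snd (zs t))) *\<^sub>R fst (zs t)"

end

theory Submission
  imports Defs
begin

lemma discr_le:
  fixes a b c :: real
  assumes "\<And>t. 0 \<le> a + 2 * b * t + c * t\<^sup>2" "0 \<le> a" "0 \<le> c"
  shows "b\<^sup>2 \<le> a * c"
proof (cases "c = 0")
  case True
  show ?thesis
  proof (rule ccontr)
    assume "\<not> ?thesis"
    then have "b \<noteq> 0" using True by simp
    have "0 \<le> a + 2 * b * (- (a + 1) / (2 * b))" using assms(1)[of "- (a + 1) / (2 * b)"] True by simp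
    also have "\<dots> = -1" using \<open>b \<noteq> 0\<close> by (simp add: field_simps)
    finally show False by simp
  qed
next
  case False
  then have c: "c > 0" using assms by simp
  have "0 \<le> a + 2 * b * (- b / c) + c * (- b / c)\<^sup>2" by (rule assms(1))
  also have "\<dots> = a - b\<^sup>2 / c" using c by (simp add: field_simps power2_eq_square)
  finally have "b\<^sup>2 / c \<le> a" by simp
  then show ?thesis using c by (simp add: field_simps mult.commute)
qed

lemma integrableI_bounded':
  fixes f :: "'a \<Rightarrow> 'b::{real_normed_vector, complete_space, second_countable_topology}"
  assumes f[measurable]: "f \<in> borel_measurable M" and fin: "(\<integral>\<^sup>+x. norm (f x) \<partial>M) < \<infinity>"
  shows "integrable M f"
proof -
  from borel_measurable_implies_sequence_metric[OF f, of 0] obtain s where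
    s: "\<And>i. simple_function M (s i)" and
    pointwise: "\<And>x. x \<in> space M \<Longrightarrow> (\<lambda>i. s i x) \<longlonglongrightarrow> f x" and
    bound: "\<And>i x. x \<in> space M \<Longrightarrow> norm (s i x) \<le> 2 * norm (f x)"
    by simp metis
  have fin_s: "(\<integral>\<^sup>+x. norm (s i x) \<partial>M) < \<infinity>" for i
  proof -
    have "(\<integral>\<^sup>+x. norm (s i x) \<partial>M) \<le> (\<integral>\<^sup>+x. ennreal (2 * norm (f x)) \<partial>M)"
      by (intro nn_integral_mono) (simp add: bound)
    also have "\<dots> = 2 * (\<integral>\<^sup>+x. ennreal (norm (f x)) \<partial>M)"
      by (simp add: ennreal_mult nn_integral_cmult)
    also have "\<dots> < top"
      using fin by (simp add: ennreal_mult_less_top)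
    finally show ?thesis by simp
  qed
  have sbi: "\<And>i. Bochner_Integration.simple_bochner_integrable M (s i)"
    by (rule simple_bochner_integrableI_bounded[OF s fin_s])
  have lim: "(\<lambda>i. \<integral>\<^sup>+ x. ennreal (norm (f x - s i x)) \<partial>M) \<longlonglongrightarrow> 0" (is "?S \<longlonglongrightarrow> 0")
  proof (rule nn_integral_dominated_convergence_norm)
    show "\<And>j. AE x in M. norm (s j x) \<le> 2 * norm (f x)"
      using bound by auto
    show "\<And>i. s i \<in> borel_measurable M" "(\<lambda>x. 2 * norm (f x)) \<in> borel_measurable M"
      using s by (auto intro: borel_measurable_simple_function)
    show "(\<integral>\<^sup>+ x. ennreal (2 * norm (f x)) \<partial>M) < \<infinity>"
      using fin by (simp add: nn_integral_cmult ennreal_mult ennreal_mult_less_top)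
    show "AE x in M. (\<lambda>i. s i x) \<longlonglongrightarrow> f x"
      using pointwise by auto
  qed fact
  let ?s = "\<lambda>n. Bochner_Integration.simple_bochner_integral M (s n)"
  have "\<exists>x. ?s \<longlonglongrightarrow> x"
    unfolding convergent_eq_Cauchy
  proof (rule metric_CauchyI)
    fix e :: real assume "0 < e"
    then have "0 < ennreal (e / 2)" by auto
    from order_tendstoD(2)[OF lim this]
    obtain N where N: "\<And>n. N \<le> n \<Longrightarrow> ?S n < e / 2"
      by (auto simp: eventually_sequentially)
    show "\<exists>M. \<forall>m\<ge>M. \<forall>n\<ge>M. dist (?s m) (?s n) < e"
    proof (intro exI allI impI)
      fix m n assume m: "N \<le> m" and n: "N \<le> n"
      have "norm (?s n - ?s m) \<le> ?S n + ?S m"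
        by (intro simple_bochner_integral_bounded sbi f)
      also have "\<dots> < ennreal (e / 2) + e / 2"
        by (intro add_strict_mono N n m)
      also have "\<dots> = e" using \<open>0<e\<close> by (simp flip: ennreal_plus)
      finally show "dist (?s m) (?s n) < e"
        using \<open>0<e\<close> by (simp add: dist_norm ennreal_less_iff norm_minus_commute)
    qed
  qed
  then obtain x where "?s \<longlonglongrightarrow> x" ..
  then have "has_bochner_integral M f x"
    using has_bochner_integral.intros[OF f sbi lim] by blast
  then show ?thesis by (rule integrable.intros)
qed

locale covs =
  fixes \<rho> :: "('a::{real_inner,second_countable_topology,complete_space} \<times> real) measure"
  assumes rho_prob: "prob_space \<rho>"
    and rho_sets: "sets \<rho> = sets borel"
    and m2: "integrable \<rho> (\<lambda>w. (norm (fst w))\<^sup>2)"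
    and m4: "integrable \<rho> (\<lambda>w. (norm (fst w)) ^ 4)"
begin

definition "H = cov_op \<rho>"
definition "q v = inner v (H v)"
definition "T = (\<integral>w. (norm (fst w))\<^sup>2 \<partial>\<rho>)"

lemma T_nonneg: "0 \<le> T" unfolding T_def by simp

lemma fst_meas[measurable]: "fst \<in> borel_measurable \<rho>"
  by (simp add: measurable_cong_sets[OF rho_sets refl] borel_measurable_continuous_onI continuous_on_fst)

lemma int_xx: "integrable \<rho> (\<lambda>z. inner (fst z) u * inner (fst z) v)"
proof (rule Bochner_Integration.integrable_bound[OF integrable_mult_right[OF m2, of "norm u * norm v"]])
  show "(\<lambda>z. inner (fst z) u * inner (fst z) v) \<in> borel_measurable \<rho>" by measurable
  show "AE z in \<rho>. norm (inner (fst z) u * inner (fst z) v) \<le> norm (norm u * norm v * (norm (fst z))\<^sup>2)"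
  proof (intro AE_I2)
    fix z :: "'a \<times> real"
    have "\<bar>inner (fst z) u\<bar> \<le> norm (fst z) * norm u" by (rule Cauchy_Schwarz_ineq2)
    moreover have "\<bar>inner (fst z) v\<bar> \<le> norm (fst z) * norm v" by (rule Cauchy_Schwarz_ineq2)
    ultimately have "\<bar>inner (fst z) u\<bar> * \<bar>inner (fst z) v\<bar> \<le> (norm (fst z) * norm u) * (norm (fst z) * norm v)"
      by (intro mult_mono) auto
    then show "norm (inner (fst z) u * inner (fst z) v) \<le> norm (norm u * norm v * (norm (fst z))\<^sup>2)"
      by (simp add: abs_mult power2_eq_square mult_ac)
  qed
qed

lemma nn_m2: "(\<integral>\<^sup>+z. ennreal (c * (norm (fst z))\<^sup>2) \<partial>\<rho>) = ennreal (c * T)" if "c \<ge> 0"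
proof -
  have "(\<integral>\<^sup>+z. ennreal (c * (norm (fst z))\<^sup>2) \<partial>\<rho>) = ennreal (\<integral>z. c * (norm (fst z))\<^sup>2 \<partial>\<rho>)"
    by (rule nn_integral_eq_integral) (use m2 that in auto)
  then show ?thesis unfolding T_def by simp
qed

lemma norm_xv: "norm (inner (fst z) v *\<^sub>R fst z) \<le> norm v * (norm (fst z))\<^sup>2"
proof -
  have "\<bar>inner (fst z) v\<bar> \<le> norm (fst z) * norm v" by (rule Cauchy_Schwarz_ineq2)
  then have "\<bar>inner (fst z) v\<bar> * norm (fst z) \<le> (norm (fst z) * norm v) * norm (fst z)"
    by (intro mult_right_mono) auto
  then show ?thesis by (simp add: power2_eq_square mult_ac)
qed

lemma nn_xv: "(\<integral>\<^sup>+z. ennreal (norm (inner (fst z) v *\<^sub>R fst z)) \<partial>\<rho>) \<le> ennreal (norm v * T)"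
proof -
  have "(\<integral>\<^sup>+z. ennreal (norm (inner (fst z) v *\<^sub>R fst z)) \<partial>\<rho>) \<le> (\<integral>\<^sup>+z. ennreal (norm v * (norm (fst z))\<^sup>2) \<partial>\<rho>)"
    by (intro nn_integral_mono ennreal_leI norm_xv)
  also have "\<dots> = ennreal (norm v * T)" by (rule nn_m2) simp
  finally show ?thesis .
qed

lemma int_xv: "integrable \<rho> (\<lambda>z. inner (fst z) v *\<^sub>R fst z)"
  by (rule integrableI_bounded') (use nn_xv[of v] in \<open>auto simp: order_le_less_trans\<close>)

lemma inner_H: "inner u (H v) = (\<integral>z. inner (fst z) v * inner (fst z) u \<partial>\<rho>)"
  unfolding H_def cov_op_def using int_xv[of v]
  by (subst integral_inner_right[symmetric]) (auto simp: inner_commute)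

lemma H_sym: "inner u (H v) = inner v (H u)"
  unfolding inner_H by (simp add: mult.commute)

lemma H_sym': "inner (H u) v = inner u (H v)"
  by (simp add: H_sym inner_commute)

lemma H_add: "H (u + v) = H u + H v"
proof -
  have "has_bochner_integral \<rho> (\<lambda>z. inner (fst z) u *\<^sub>R fst z + inner (fst z) v *\<^sub>R fst z) (H u + H v)"
    unfolding H_def cov_op_def by (intro has_bochner_integral_add has_bochner_integral_integrable int_xv)
  then show ?thesis unfolding H_def cov_op_def
    by (simp add: inner_add_right scaleR_add_left has_bochner_integral_integral_eq)
qed

lemma H_scale: "H (c *\<^sub>R v) = c *\<^sub>R H v"
  unfolding H_def cov_op_def
  by (subst integral_scaleR_right[symmetric]) (simp add: inner_scaleR_right)


lemma H_norm: "norm (H v) \<le> norm v * T"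
proof -
  have "ennreal (norm (H v)) \<le> (\<integral>\<^sup>+z. ennreal (norm (inner (fst z) v *\<^sub>R fst z)) \<partial>\<rho>)"
    unfolding H_def cov_op_def by (rule has_bochner_integral_norm_bound[OF has_bochner_integral_integrable[OF int_xv]])
  also have "\<dots> \<le> ennreal (norm v * T)" by (rule nn_xv)
  finally show ?thesis using T_nonneg by (simp add: ennreal_le_iff)
qed

lemma H_linear: "linear H"
  by (rule linearI) (auto simp: H_add H_scale)

lemma H_bl: "bounded_linear H"
  using H_linear H_norm by (auto simp: bounded_linear_def bounded_linear_axioms_def intro!: exI[of _ T])

lemma H_zero: "H 0 = 0" using H_scale[of 0 0] by simp
lemma H_minus: "H (- v) = - H v" using H_scale[of "-1" v] by simp
lemma H_diff: "H (u - v) = H u - H v" using H_add[of u "- v"] H_minus by simp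

lemma q_int: "q v = (\<integral>z. (inner (fst z) v)\<^sup>2 \<partial>\<rho>)"
  unfolding q_def inner_H by (simp add: power2_eq_square)

lemma q_nonneg: "0 \<le> q v" unfolding q_int by simp

lemma q_le_T: "q v \<le> T * (norm v)\<^sup>2"
proof -
  have "q v \<le> norm v * norm (H v)" unfolding q_def by (rule order_trans[OF abs_ge_self Cauchy_Schwarz_ineq2])
  also have "\<dots> \<le> norm v * (norm v * T)" by (intro mult_left_mono H_norm) auto
  finally show ?thesis by (simp add: power2_eq_square mult_ac)
qed

lemma q_add_scale: "q (u + t *\<^sub>R v) = q u + 2 * inner u (H v) * t + q v * t\<^sup>2"
  unfolding q_def H_add H_scale
  by (simp add: inner_add_left inner_add_right H_sym[of v u] power2_eq_square algebra_simps)

lemma H_CS: "(inner u (H v))\<^sup>2 \<le> q u * q v"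
  by (rule discr_le[OF _ q_nonneg q_nonneg]) (metis q_add_scale q_nonneg)

end

lemma compact_combo:
  fixes A :: "'b::real_normed_vector set" and b :: "'b \<Rightarrow> real"
  assumes "finite A"
  shows "\<exists>K. compact K \<and> (\<forall>c. (\<forall>y\<in>A. \<bar>c y\<bar> \<le> b y) \<longrightarrow> (\<Sum>y\<in>A. c y *\<^sub>R y) \<in> K)"
  using assms
proof (induction A rule: finite_induct)
  case empty
  then show ?case by (intro exI[of _ "{0}"]) auto
next
  case (insert a F)
  then obtain K where K: "compact K" "\<forall>c. (\<forall>y\<in>F. \<bar>c y\<bar> \<le> b y) \<longrightarrow> (\<Sum>y\<in>F. c y *\<^sub>R y) \<in> K" by blast
  let ?L = "(\<lambda>t. t *\<^sub>R a) ` {- b a..b a}"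
  have "compact ?L" by (intro compact_continuous_image continuous_intros compact_Icc)
  then have "compact {x + y | x y. x \<in> ?L \<and> y \<in> K}" using K(1) by (rule compact_sums)
  moreover have "(\<Sum>y\<in>insert a F. c y *\<^sub>R y) \<in> {x + y | x y. x \<in> ?L \<and> y \<in> K}"
    if "\<forall>y\<in>insert a F. \<bar>c y\<bar> \<le> b y" for c
  proof -
    have "c a \<in> {- b a..b a}" using that by (auto simp: abs_le_iff)
    then have "c a *\<^sub>R a \<in> ?L" by (rule imageI)
    moreover have "(\<Sum>y\<in>F. c y *\<^sub>R y) \<in> K" using K(2) that by auto
    ultimately show ?thesis using insert.hyps by auto
  qed
  ultimately show ?case by blast
qed

context covs begin

lemma space_rho: "space \<rho> = UNIV"
  using sets_eq_imp_space_eq[OF rho_sets] by simp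

lemma err_int:
  assumes s: "simple_function \<rho> s" and bd: "\<And>z. norm (s z) \<le> 2 * norm (fst z)"
  shows "integrable \<rho> (\<lambda>z. norm (fst z - s z) * (norm (fst z) + norm (s z)))"
proof (rule Bochner_Integration.integrable_bound[OF integrable_mult_right[OF m2, of 9]])
  have [measurable]: "s \<in> borel_measurable \<rho>" using s by (rule borel_measurable_simple_function)
  show "(\<lambda>z. norm (fst z - s z) * (norm (fst z) + norm (s z))) \<in> borel_measurable \<rho>" by measurable
  show "AE z in \<rho>. norm (norm (fst z - s z) * (norm (fst z) + norm (s z))) \<le> norm (9 * (norm (fst z))\<^sup>2)"
  proof (intro AE_I2)
    fix z
    have a: "norm (fst z - s z) \<le> 3 * norm (fst z)" using norm_triangle_ineq4[of "fst z" "s z"] bd[of z] by simp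
    have b: "norm (fst z) + norm (s z) \<le> 3 * norm (fst z)" using bd[of z] by simp
    have "norm (fst z - s z) * (norm (fst z) + norm (s z)) \<le> (3 * norm (fst z)) * (3 * norm (fst z))"
      by (intro mult_mono a b) auto
    then show "norm (norm (fst z - s z) * (norm (fst z) + norm (s z))) \<le> norm (9 * (norm (fst z))\<^sup>2)"
      by (simp add: power2_eq_square)
  qed
qed

lemma approx:
  "\<exists>s. (\<forall>i. simple_function \<rho> (s i)) \<and> (\<forall>i z. norm (s i z) \<le> 2 * norm (fst z)) \<and>
    (\<lambda>i. \<integral>z. norm (fst z - s i z) * (norm (fst z) + norm (s i z)) \<partial>\<rho>) \<longlonglongrightarrow> 0"
proof -
  from borel_measurable_implies_sequence_metric[OF fst_meas, of 0] obtain s where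
    s0: "\<forall>i. simple_function \<rho> (s i)" and
    pw0: "\<forall>z\<in>space \<rho>. (\<lambda>i. s i z) \<longlonglongrightarrow> fst z" and
    bd0: "\<forall>i. \<forall>z\<in>space \<rho>. dist (s i z) 0 \<le> 2 * dist (fst z) 0"
    by blast
  have s: "\<And>i. simple_function \<rho> (s i)" using s0 by blast
  have pw: "\<And>z. (\<lambda>i. s i z) \<longlonglongrightarrow> fst z" using pw0 unfolding space_rho by blast
  have bd: "norm (s i z) \<le> 2 * norm (fst z)" for i z
  proof -
    from bd0 have "dist (s i z) 0 \<le> 2 * dist (fst z) 0" unfolding space_rho by blast
    then show ?thesis by (simp add: dist_norm)
  qed
  have sm[measurable]: "\<And>i. s i \<in> borel_measurable \<rho>" using s by (rule borel_measurable_simple_function)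
  have "(\<lambda>i. \<integral>z. norm (fst z - s i z) * (norm (fst z) + norm (s i z)) \<partial>\<rho>) \<longlonglongrightarrow> (\<integral>z. 0 \<partial>\<rho>)"
  proof (rule integral_dominated_convergence[where w="\<lambda>z. 9 * (norm (fst z))\<^sup>2"])
    show "(\<lambda>z. 0::real) \<in> borel_measurable \<rho>" by simp
    show "(\<lambda>z. norm (fst z - s i z) * (norm (fst z) + norm (s i z))) \<in> borel_measurable \<rho>" for i
      by measurable
    show "integrable \<rho> (\<lambda>z. 9 * (norm (fst z))\<^sup>2)" using m2 by simp
    show "AE z in \<rho>. (\<lambda>i. norm (fst z - s i z) * (norm (fst z) + norm (s i z))) \<longlonglongrightarrow> 0"
    proof (intro AE_I2)
      fix z
      have "(\<lambda>i. norm (fst z - s i z)) \<longlonglongrightarrow> norm (fst z - fst z)"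
        by (rule tendsto_norm[OF tendsto_diff[OF tendsto_const pw]])
      moreover have "(\<lambda>i. norm (fst z) + norm (s i z)) \<longlonglongrightarrow> norm (fst z) + norm (fst z)"
        by (rule tendsto_add[OF tendsto_const tendsto_norm[OF pw]])
      ultimately have "(\<lambda>i. norm (fst z - s i z) * (norm (fst z) + norm (s i z))) \<longlonglongrightarrow>
          norm (fst z - fst z) * (norm (fst z) + norm (fst z))" by (rule tendsto_mult)
      then show "(\<lambda>i. norm (fst z - s i z) * (norm (fst z) + norm (s i z))) \<longlonglongrightarrow> 0" by simp
    qed
    show "AE z in \<rho>. norm (norm (fst z - s i z) * (norm (fst z) + norm (s i z))) \<le> 9 * (norm (fst z))\<^sup>2" for i
    proof (intro AE_I2)
      fix z
      have a: "norm (fst z - s i z) \<le> 3 * norm (fst z)" using norm_triangle_ineq4[of "fst z" "s i z"] bd[of i z] by simp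
      have b: "norm (fst z) + norm (s i z) \<le> 3 * norm (fst z)" using bd[of i z] by simp
      have "norm (fst z - s i z) * (norm (fst z) + norm (s i z)) \<le> (3 * norm (fst z)) * (3 * norm (fst z))"
        by (intro mult_mono a b) auto
      then show "norm (norm (fst z - s i z) * (norm (fst z) + norm (s i z))) \<le> 9 * (norm (fst z))\<^sup>2"
        by (simp add: power2_eq_square)
    qed
  qed
  then have lim: "(\<lambda>i. \<integral>z. norm (fst z - s i z) * (norm (fst z) + norm (s i z)) \<partial>\<rho>) \<longlonglongrightarrow> 0"
    by simp
  show ?thesis
    apply (rule exI[of _ s])
    apply (intro conjI allI)
      apply (rule s)
     apply (rule bd)
    apply (rule lim)
    done
qed

definition Happ :: "('a \<times> real \<Rightarrow> 'a) \<Rightarrow> 'a \<Rightarrow> 'a" where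
  "Happ s v = (\<Sum>a\<in>s ` space \<rho>. measure \<rho> {z\<in>space \<rho>. s z = a} *\<^sub>R (inner a v *\<^sub>R a))"

lemma Happ_err:
  assumes s: "simple_function \<rho> s" and bd: "\<And>z. norm (s z) \<le> 2 * norm (fst z)" and v: "norm v \<le> 1"
  shows "norm (H v - Happ s v) \<le> (\<integral>z. norm (fst z - s z) * (norm (fst z) + norm (s z)) \<partial>\<rho>)"
proof -
  interpret P: prob_space \<rho> by (rule rho_prob)
  have [measurable]: "s \<in> borel_measurable \<rho>" using s by (rule borel_measurable_simple_function)
  let ?f = "\<lambda>z. inner (s z) v *\<^sub>R s z"
  have sbi: "Bochner_Integration.simple_bochner_integrable \<rho> ?f"
  proof (rule Bochner_Integration.simple_bochner_integrable.intros)
    show "simple_function \<rho> ?f" using s by (rule simple_function_compose1)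
    show "emeasure \<rho> {y \<in> space \<rho>. ?f y \<noteq> 0} \<noteq> \<infinity>"
      using P.emeasure_finite by (simp add: infinity_ennreal_def)
  qed
  have int_eq: "Bochner_Integration.simple_bochner_integral \<rho> ?f = Happ s v"
    unfolding Happ_def by (rule simple_bochner_integral_partition[OF sbi s]) auto
  have hb: "has_bochner_integral \<rho> (\<lambda>z. inner (fst z) v *\<^sub>R fst z - ?f z) (H v - Happ s v)"
    using has_bochner_integral_diff[OF has_bochner_integral_integrable[OF int_xv]
        has_bochner_integral_simple_bochner_integrable[OF sbi]] int_eq
    unfolding H_def cov_op_def by simp
  have "ennreal (norm (H v - Happ s v)) \<le> (\<integral>\<^sup>+z. norm (inner (fst z) v *\<^sub>R fst z - ?f z) \<partial>\<rho>)"
    by (rule has_bochner_integral_norm_bound[OF hb])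
  also have "\<dots> \<le> (\<integral>\<^sup>+z. ennreal (norm (fst z - s z) * (norm (fst z) + norm (s z))) \<partial>\<rho>)"
  proof (intro nn_integral_mono ennreal_leI)
    fix z
    have eq: "inner (fst z) v *\<^sub>R fst z - ?f z = inner (fst z - s z) v *\<^sub>R fst z + inner (s z) v *\<^sub>R (fst z - s z)"
      by (simp add: inner_diff_left algebra_simps)
    have c1: "\<bar>inner (fst z - s z) v\<bar> \<le> norm (fst z - s z)"
      using Cauchy_Schwarz_ineq2[of "fst z - s z" v] v
      by (meson mult_left_le norm_ge_zero order_trans)
    have c2: "\<bar>inner (s z) v\<bar> \<le> norm (s z)"
      using Cauchy_Schwarz_ineq2[of "s z" v] v
      by (meson mult_left_le norm_ge_zero order_trans)
    have "norm (inner (fst z) v *\<^sub>R fst z - ?f z) \<le> norm (inner (fst z - s z) v *\<^sub>R fst z) + norm (inner (s z) v *\<^sub>R (fst z - s z))"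
      unfolding eq by (rule norm_triangle_ineq)
    also have "\<dots> \<le> norm (fst z - s z) * norm (fst z) + norm (s z) * norm (fst z - s z)"
      by (intro add_mono) (auto intro!: mult_right_mono c1 c2)
    finally show "norm (inner (fst z) v *\<^sub>R fst z - ?f z) \<le> norm (fst z - s z) * (norm (fst z) + norm (s z))"
      by (simp add: algebra_simps)
  qed
  also have "\<dots> = ennreal (\<integral>z. norm (fst z - s z) * (norm (fst z) + norm (s z)) \<partial>\<rho>)"
    by (rule nn_integral_eq_integral) (use err_int[OF s bd] in auto)
  finally show ?thesis by (subst (asm) ennreal_le_iff) (auto intro!: integral_nonneg)
qed

lemma Happ_in:
  assumes s: "simple_function \<rho> s"
  obtains K where "compact K" "\<And>v. norm v \<le> 1 \<Longrightarrow> Happ s v \<in> K"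
proof -
  interpret P: prob_space \<rho> by (rule rho_prob)
  have fin: "finite (s ` space \<rho>)" using s by (rule simple_functionD)
  from compact_combo[OF fin, of norm] obtain K where K: "compact K"
    "\<forall>c. (\<forall>y\<in>s ` space \<rho>. \<bar>c y\<bar> \<le> norm y) \<longrightarrow> (\<Sum>y\<in>s ` space \<rho>. c y *\<^sub>R y) \<in> K" by blast
  show ?thesis
  proof (rule that[OF K(1)])
    fix v :: 'a assume v: "norm v \<le> 1"
    let ?c = "\<lambda>a. measure \<rho> {z\<in>space \<rho>. s z = a} * inner a v"
    have "\<bar>?c y\<bar> \<le> norm y" for y
    proof -
      have m: "measure \<rho> {z\<in>space \<rho>. s z = y} \<le> 1" by (rule P.prob_le_1)
      have "\<bar>inner y v\<bar> \<le> norm y" using Cauchy_Schwarz_ineq2[of y v] v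
        by (meson mult_left_le norm_ge_zero order_trans)
      then have "\<bar>measure \<rho> {z\<in>space \<rho>. s z = y}\<bar> * \<bar>inner y v\<bar> \<le> 1 * norm y"
        using m by (intro mult_mono) auto
      then show ?thesis by (simp add: abs_mult)
    qed
    then have "(\<Sum>y\<in>s ` space \<rho>. ?c y *\<^sub>R y) \<in> K" using K(2)[rule_format, of ?c] by blast
    then show "Happ s v \<in> K" unfolding Happ_def by simp
  qed
qed

lemma H_tb:
  assumes e: "e > 0"
  shows "\<exists>k. finite k \<and> H ` cball 0 1 \<subseteq> (\<Union>x\<in>k. ball x e)"
proof -
  from approx obtain s where s0: "\<forall>i. simple_function \<rho> (s i)" and bd0: "\<forall>i z. norm (s i z) \<le> 2 * norm (fst z)"
    and lim: "(\<lambda>i. \<integral>z. norm (fst z - s i z) * (norm (fst z) + norm (s i z)) \<partial>\<rho>) \<longlonglongrightarrow> 0"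
    by blast
  have s: "\<And>i. simple_function \<rho> (s i)" and bd: "\<And>i z. norm (s i z) \<le> 2 * norm (fst z)"
    using s0 bd0 by blast+
  from order_tendstoD(2)[OF lim, of "e/2"] e obtain i where
    i: "(\<integral>z. norm (fst z - s i z) * (norm (fst z) + norm (s i z)) \<partial>\<rho>) < e/2"
    by (auto simp: eventually_sequentially)
  obtain K where K: "compact K" "\<And>v. norm v \<le> 1 \<Longrightarrow> Happ (s i) v \<in> K" by (rule Happ_in[OF s[of i]]) blast
  have tb: "\<forall>e>0. \<exists>k. finite k \<and> K \<subseteq> (\<Union>x\<in>k. ball x e)"
    using K(1) unfolding compact_eq_totally_bounded by blast
  have e2: "e/2 > 0" using e by simp
  from tb e2 obtain k where k: "finite k" "K \<subseteq> (\<Union>x\<in>k. ball x (e/2))"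
    by blast
  have "H ` cball 0 1 \<subseteq> (\<Union>x\<in>k. ball x e)"
  proof
    fix y assume "y \<in> H ` cball 0 1"
    then obtain v where v: "norm v \<le> 1" "y = H v" by auto
    from K(2)[OF v(1)] k(2) obtain x where x: "x \<in> k" "dist x (Happ (s i) v) < e/2" by auto
    have "dist (Happ (s i) v) (H v) < e/2"
      using Happ_err[OF s[of i] bd[of i] v(1)] i by (simp add: dist_norm norm_minus_commute)
    moreover have "dist x (H v) \<le> dist x (Happ (s i) v) + dist (Happ (s i) v) (H v)" by (rule dist_triangle)
    ultimately have "dist x (H v) < e" using x(2) by linarith
    then show "y \<in> (\<Union>x\<in>k. ball x e)" using x(1) v(2) by auto
  qed
  then show ?thesis using k(1) by blast
qed

lemma H_compact: "compact (closure (H ` cball 0 1))"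
  unfolding compact_eq_totally_bounded
proof (intro conjI allI impI)
  show "Topological_Spaces.complete (closure (H ` cball 0 1))" by (simp add: complete_eq_closed)
  fix e :: real assume e: "e > 0"
  from H_tb[of "e/2"] e obtain k where k: "finite k" "H ` cball 0 1 \<subseteq> (\<Union>x\<in>k. ball x (e/2))" by auto
  have "closure (H ` cball 0 1) \<subseteq> (\<Union>x\<in>k. cball x (e/2))"
  proof (rule closure_minimal)
    show "H ` cball 0 1 \<subseteq> (\<Union>x\<in>k. cball x (e/2))"
      using k(2) ball_subset_cball by blast
    show "closed (\<Union>x\<in>k. cball x (e/2))" using k(1) by (intro closed_UN) auto
  qed
  also have "\<dots> \<subseteq> (\<Union>x\<in>k. ball x e)"
  proof (rule UN_mono)
    show "cball x (e/2) \<subseteq> ball x e" for x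
      unfolding subset_eq mem_cball mem_ball using e by auto
  qed simp
  finally show "\<exists>k. finite k \<and> closure (H ` cball 0 1) \<subseteq> (\<Union>x\<in>k. ball x e)" using k(1) by blast
qed

end

context covs begin

definition "Aop g v = v - g *\<^sub>R H v"
definition "D g j = (Aop g ^^ j)"

lemma D_0[simp]: "D g 0 v = v" unfolding D_def by simp
lemma D_Suc: "D g (Suc j) v = Aop g (D g j v)" unfolding D_def by simp
lemma D_Suc': "D g (Suc j) v = D g j (Aop g v)" unfolding D_def by (simp add: funpow_Suc_right del: funpow.simps)
lemma D_add_idx: "D g (i + j) v = D g i (D g j v)" unfolding D_def by (simp add: funpow_add)

lemma Aop_add: "Aop g (u + v) = Aop g u + Aop g v"
  unfolding Aop_def H_add by (simp add: algebra_simps)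
lemma Aop_scale: "Aop g (c *\<^sub>R v) = c *\<^sub>R Aop g v"
  unfolding Aop_def H_scale by (simp add: algebra_simps)
lemma Aop_H: "H (Aop g v) = Aop g (H v)"
  unfolding Aop_def H_diff H_scale by simp
lemma Aop_sym: "inner (Aop g u) w = inner u (Aop g w)"
  unfolding Aop_def by (simp add: inner_diff_left inner_diff_right H_sym')

lemma D_add: "D g j (u + v) = D g j u + D g j v"
  by (induction j) (simp_all add: D_Suc Aop_add)
lemma D_scale: "D g j (c *\<^sub>R v) = c *\<^sub>R D g j v"
  by (induction j) (simp_all add: D_Suc Aop_scale)
lemma D_minus: "D g j (- v) = - D g j v"
  using D_scale[of g j "-1" v] by simp
lemma D_diff: "D g j (u - v) = D g j u - D g j v"
  using D_add[of g j u "- v"] D_minus by simp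
lemma D_H: "H (D g j v) = D g j (H v)"
  by (induction j) (simp_all add: D_Suc Aop_H)
lemma D_sym: "inner (D g j u) w = inner u (D g j w)"
proof (induction j arbitrary: w)
  case 0 then show ?case by simp
next
  case (Suc j)
  have "inner (D g (Suc j) u) w = inner (D g j u) (Aop g w)" by (simp add: D_Suc Aop_sym)
  also have "\<dots> = inner u (D g j (Aop g w))" by (rule Suc.IH)
  also have "\<dots> = inner u (D g (Suc j) w)" by (simp add: D_Suc')
  finally show ?case .
qed

lemma Aop_bl: "bounded_linear (Aop g)"
  unfolding Aop_def[abs_def]
  by (intro bounded_linear_sub bounded_linear_ident bounded_linear_compose[OF bounded_linear_scaleR_right H_bl])

lemma D_bl: "bounded_linear (D g j)"
proof (induction j)
  case 0
  then show ?case unfolding D_def by (simp add: bounded_linear_ident id_def)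
next
  case (Suc j)
  have "D g (Suc j) = (\<lambda>v. Aop g (D g j v))" by (simp add: D_Suc fun_eq_iff)
  then show ?case using bounded_linear_compose[OF Aop_bl Suc] by simp
qed

definition "qj g j v = q (D g j v)"

lemma qj_nonneg: "0 \<le> qj g j v" unfolding qj_def by (rule q_nonneg)

lemma qj_alt: "qj g j v = inner v (H (D g (j + j) v))"
  unfolding qj_def q_def D_add_idx D_H by (simp add: D_sym)

lemma qj_Suc: "qj g (Suc j) v = qj g j (Aop g v)"
  unfolding qj_def D_Suc' ..

lemma q_scale: "q (c *\<^sub>R v) = c\<^sup>2 * q v"
  unfolding q_def H_scale by (simp add: power2_eq_square)

lemma Hnorm_sq:
  assumes qb: "\<And>v. q v \<le> l * (norm v)\<^sup>2" and l: "0 \<le> l"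
  shows "(norm (H u))\<^sup>2 \<le> l * q u"
proof -
  have e: "inner u (H (H u)) = (norm (H u))\<^sup>2"
    by (simp add: H_sym'[symmetric] power2_norm_eq_inner)
  have "((norm (H u))\<^sup>2)\<^sup>2 \<le> q u * q (H u)" using H_CS[of u "H u"] unfolding e .
  also have "\<dots> \<le> q u * (l * (norm (H u))\<^sup>2)" by (intro mult_left_mono qb q_nonneg)
  finally have *: "(norm (H u))\<^sup>2 * (norm (H u))\<^sup>2 \<le> (l * q u) * (norm (H u))\<^sup>2"
    by (simp add: power2_eq_square mult_ac)
  show ?thesis
  proof (cases "norm (H u) = 0")
    case True
    then show ?thesis using l q_nonneg by simp
  next
    case False
    then have pos: "(norm (H u))\<^sup>2 > 0" by simp
    show ?thesis using mult_le_cancel_right_pos[OF pos] * by blast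
  qed
qed

end

locale covg = covs \<rho> for \<rho> :: "('a::{real_inner,second_countable_topology,complete_space} \<times> real) measure" +
  fixes g l :: real
  assumes g_pos: "0 < g"
    and qb: "\<And>v. q v \<le> l * (norm v)\<^sup>2"
    and gl: "g * l \<le> 1"
    and l_nonneg: "0 \<le> l"
begin

lemma Aop_pos: "0 \<le> inner u (Aop g u)"
proof -
  have "g * q u \<le> g * (l * (norm u)\<^sup>2)" using qb g_pos by (intro mult_left_mono) auto
  also have "\<dots> = (g * l) * (norm u)\<^sup>2" by simp
  also have "\<dots> \<le> 1 * (norm u)\<^sup>2" using gl by (intro mult_right_mono) auto
  finally show ?thesis unfolding Aop_def q_def by (simp add: inner_diff_right power2_norm_eq_inner)
qed

lemma D_pos: "0 \<le> inner w (D g i w)"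
proof -
  define m where "m = i div 2"
  have "i = m + m \<or> i = Suc (m + m)" unfolding m_def by presburger
  then show ?thesis
  proof
    assume "i = m + m"
    then have "inner w (D g i w) = inner (D g m w) (D g m w)" by (simp add: D_add_idx D_sym)
    then show ?thesis by simp
  next
    assume "i = Suc (m + m)"
    then have "D g i w = D g m (D g (Suc m) w)" by (simp add: D_add_idx[symmetric])
    then have "inner w (D g i w) = inner (D g m w) (Aop g (D g m w))"
      by (simp add: D_Suc D_sym)
    then show ?thesis using Aop_pos by simp
  qed
qed

definition "aa v i = g * inner v (H (D g i v))"

lemma aa_dec: "aa v (Suc i) \<le> aa v i"
proof -
  have eqD: "D g (Suc i) v = D g i v - g *\<^sub>R D g i (H v)"
    by (simp add: D_Suc' Aop_def D_diff D_scale)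
  have "inner v (H (D g (Suc i) v)) = inner v (H (D g i v)) - g * inner v (H (D g i (H v)))"
    unfolding eqD by (simp add: H_diff H_scale inner_diff_right)
  also have "inner v (H (D g i (H v))) = inner (H v) (D g i (H v))" by (rule H_sym'[symmetric])
  finally have E: "inner v (H (D g (Suc i) v)) = inner v (H (D g i v)) - g * inner (H v) (D g i (H v))" .
  have "aa v i - aa v (Suc i) = g * g * inner (H v) (D g i (H v))"
    unfolding aa_def E by (simp add: algebra_simps)
  also have "\<dots> \<ge> 0" using D_pos g_pos by simp
  finally show ?thesis by simp
qed

lemma aa_mono: "i \<le> j \<Longrightarrow> aa v j \<le> aa v i"
  by (induction j rule: dec_induct) (auto intro: order_trans[OF aa_dec])

lemma aa_sum: "(\<Sum>i<n. aa v i) = inner v v - inner v (D g n v)"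
proof (induction n)
  case 0 then show ?case by simp
next
  case (Suc n)
  have "aa v n = inner v (D g n v) - inner v (D g (Suc n) v)"
    unfolding aa_def D_Suc Aop_def by (simp add: inner_diff_right)
  then show ?case using Suc by simp
qed

lemma qj_bound: "qj g j v \<le> (norm v)\<^sup>2 / (g * (2 * real j + 1))"
proof -
  let ?n = "Suc (j + j)"
  have "(\<Sum>i<?n. aa v (j + j)) \<le> (\<Sum>i<?n. aa v i)"
    by (intro sum_mono aa_mono) auto
  also have "\<dots> = inner v v - inner v (D g ?n v)" by (rule aa_sum)
  also have "\<dots> \<le> (norm v)\<^sup>2" using D_pos[of v ?n] by (simp add: power2_norm_eq_inner)
  finally have "real ?n * (g * qj g j v) \<le> (norm v)\<^sup>2" by (simp add: aa_def qj_alt)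
  then have "(g * (2 * real j + 1)) * qj g j v \<le> (norm v)\<^sup>2" by (simp add: algebra_simps)
  moreover have "g * (2 * real j + 1) > 0" using g_pos by simp
  ultimately show ?thesis by (simp add: field_simps)
qed

lemma qj_le_q: "qj g j v \<le> q v"
proof -
  have "aa v (j + j) \<le> aa v 0" by (rule aa_mono) simp
  then show ?thesis using g_pos by (simp add: aa_def qj_alt q_def)
qed

end

context covs begin

lemma q_le_eig:
  assumes le: "largest_eigenvalue H l"
  shows "q v \<le> l * (norm v)\<^sup>2" and "0 \<le> l"
proof -
  from le obtain v0 where v0: "v0 \<noteq> 0" "H v0 = l *\<^sub>R v0"
    unfolding largest_eigenvalue_def is_eigenvalue_def by blast
  have "q v0 = l * (norm v0)\<^sup>2" unfolding q_def v0(2) by (simp add: power2_norm_eq_inner)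
  with q_nonneg[of v0] v0(1) show l0: "0 \<le> l" by (simp add: zero_le_mult_iff)
  define S where "S = q ` cball 0 1"
  have Sne: "S \<noteq> {}" unfolding S_def by auto
  have Sbdd: "bdd_above S" unfolding S_def
  proof (rule bdd_aboveI2)
    fix x :: 'a assume "x \<in> cball 0 1"
    then have "norm x \<le> 1" by simp
    then have "(norm x)\<^sup>2 \<le> 1" by (simp add: power_le_one)
    then have "T * (norm x)\<^sup>2 \<le> T * 1" using T_nonneg by (intro mult_left_mono) auto
    then show "q x \<le> T" using q_le_T[of x] by simp
  qed
  define lam where "lam = Sup S"
  have up: "q u \<le> lam" if "norm u \<le> 1" for u
    unfolding lam_def using Sbdd that by (intro cSup_upper) (auto simp: S_def)
  have q0: "q 0 = 0" unfolding q_def by simp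
  have lam0: "0 \<le> lam" using up[of 0] q0 by simp
  have qlam: "q u \<le> lam * (norm u)\<^sup>2" for u
  proof (cases "u = 0")
    case True then show ?thesis using q0 by simp
  next
    case False
    let ?u = "(1 / norm u) *\<^sub>R u"
    have "q ?u \<le> lam" by (rule up) (simp add: False)
    moreover have "q ?u = q u / (norm u)\<^sup>2" using q_scale[of "1/norm u" u] by (simp add: power_divide)
    ultimately show ?thesis using False by (simp add: field_simps)
  qed
  show "q v \<le> l * (norm v)\<^sup>2"
  proof (cases "lam \<le> l")
    case True
    then have "lam * (norm v)\<^sup>2 \<le> l * (norm v)\<^sup>2" by (intro mult_right_mono) auto
    then show ?thesis using qlam[of v] by linarith
  next
    case False
    then have lampos: "lam > 0" "l < lam" using l0 by auto
    have "\<forall>n. \<exists>u. norm u \<le> 1 \<and> lam - inverse (real (Suc n)) < q u"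
    proof
      fix n
      have "lam - inverse (real (Suc n)) < Sup S" unfolding lam_def[symmetric] by simp
      then obtain y where "y \<in> S" "lam - inverse (real (Suc n)) < y" using less_cSupE[OF _ Sne] by blast
      then show "\<exists>u. norm u \<le> 1 \<and> lam - inverse (real (Suc n)) < q u" unfolding S_def by auto
    qed
    then obtain vs where vs: "\<And>n. norm (vs n) \<le> 1" "\<And>n. lam - inverse (real (Suc n)) < q (vs n)"
      by metis
    have Hsq: "(norm (H u))\<^sup>2 \<le> lam * q u" for u by (rule Hnorm_sq[OF qlam lam0])
    have err: "norm (H (vs n) - lam *\<^sub>R vs n) \<le> sqrt (lam * inverse (real (Suc n)))" for n
    proof -
      have n1: "(norm (vs n))\<^sup>2 \<le> 1" using vs(1)[of n] by (simp add: power_le_one)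
      have "(norm (H (vs n) - lam *\<^sub>R vs n))\<^sup>2 = inner (H (vs n) - lam *\<^sub>R vs n) (H (vs n) - lam *\<^sub>R vs n)"
        by (rule power2_norm_eq_inner)
      also have "\<dots> = inner (H (vs n)) (H (vs n)) - 2 * lam * inner (vs n) (H (vs n)) + lam\<^sup>2 * inner (vs n) (vs n)"
        by (simp add: inner_diff_left inner_diff_right inner_commute[of "H (vs n)" "vs n"] power2_eq_square algebra_simps)
      also have "\<dots> = (norm (H (vs n)))\<^sup>2 - 2 * lam * q (vs n) + lam\<^sup>2 * (norm (vs n))\<^sup>2"
        by (simp add: power2_norm_eq_inner q_def)
      also have "\<dots> \<le> lam * q (vs n) - 2 * lam * q (vs n) + lam\<^sup>2 * 1"
        using Hsq[of "vs n"] mult_left_mono[OF n1, of "lam\<^sup>2"] by simp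
      also have "\<dots> = lam * (lam - q (vs n))" by (simp add: power2_eq_square algebra_simps)
      also have "\<dots> \<le> lam * inverse (real (Suc n))" using vs(2)[of n] lam0 by (intro mult_left_mono) auto
      finally show ?thesis by (rule real_le_rsqrt)
    qed
    have err0: "(\<lambda>n. H (vs n) - lam *\<^sub>R vs n) \<longlonglongrightarrow> 0"
    proof (rule Lim_null_comparison)
      show "\<forall>\<^sub>F n in sequentially. norm (H (vs n) - lam *\<^sub>R vs n) \<le> sqrt (lam * inverse (real (Suc n)))"
        using err by simp
      have "(\<lambda>n. sqrt (lam * inverse (real (Suc n)))) \<longlonglongrightarrow> sqrt (lam * 0)"
        by (intro tendsto_real_sqrt tendsto_mult tendsto_const LIMSEQ_inverse_real_of_nat)
      then show "(\<lambda>n. sqrt (lam * inverse (real (Suc n)))) \<longlonglongrightarrow> 0" by simp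
    qed
    have inK: "\<forall>n. H (vs n) \<in> closure (H ` cball 0 1)"
      using vs(1) closure_subset by fastforce
    obtain w r where r: "strict_mono r" and lim: "((\<lambda>n. H (vs n)) \<circ> r) \<longlonglongrightarrow> w"
      using seq_compactE[OF compact_imp_seq_compact[OF H_compact] inK] by blast
    have e2: "((\<lambda>n. H (vs n) - lam *\<^sub>R vs n) \<circ> r) \<longlonglongrightarrow> 0" by (rule LIMSEQ_subseq_LIMSEQ[OF err0 r])
    have "(\<lambda>n. (1/lam) *\<^sub>R (H (vs (r n)) - (H (vs (r n)) - lam *\<^sub>R vs (r n)))) \<longlonglongrightarrow> (1/lam) *\<^sub>R (w - 0)"
      using lim e2 unfolding o_def by (intro tendsto_intros)
    then have vlim: "(\<lambda>n. vs (r n)) \<longlonglongrightarrow> (1/lam) *\<^sub>R w" using lampos by simp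
    define u where "u = (1/lam) *\<^sub>R w"
    have "(\<lambda>n. H (vs (r n))) \<longlonglongrightarrow> H u" using bounded_linear.tendsto[OF H_bl vlim] unfolding u_def .
    moreover have "(\<lambda>n. H (vs (r n))) \<longlonglongrightarrow> w" using lim by (simp add: o_def)
    ultimately have Hu: "H u = w" by (rule LIMSEQ_unique)
    have "lam *\<^sub>R u = w" using lampos unfolding u_def by simp
    then have Hu': "H u = lam *\<^sub>R u" using Hu by simp
    have qlim: "(\<lambda>n. q (vs (r n))) \<longlonglongrightarrow> inner u (H u)"
      unfolding q_def u_def using vlim bounded_linear.tendsto[OF H_bl vlim] by (intro tendsto_inner)
    have "\<forall>\<^sub>F n in sequentially. inverse (real (Suc n)) < lam / 2"
      using order_tendstoD(2)[OF LIMSEQ_inverse_real_of_nat, of "lam/2"] lampos by simp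
    then obtain N where N: "\<And>n. N \<le> n \<Longrightarrow> inverse (real (Suc n)) < lam / 2"
      by (auto simp: eventually_sequentially)
    have "lam / 2 \<le> inner u (H u)"
    proof (rule LIMSEQ_le_const[OF qlim])
      show "\<exists>N. \<forall>n\<ge>N. lam / 2 \<le> q (vs (r n))"
      proof (intro exI allI impI)
        fix n assume "N \<le> n"
        then have "N \<le> r n" using seq_suble[OF r, of n] by linarith
        then have "inverse (real (Suc (r n))) < lam / 2" by (rule N)
        then show "lam/2 \<le> q (vs (r n))" using vs(2)[of "r n"] by linarith
      qed
    qed
    then have "u \<noteq> 0" using lampos by auto
    then have "is_eigenvalue H lam" unfolding is_eigenvalue_def using Hu' by blast
    then have "lam \<le> l" using le unfolding largest_eigenvalue_def by blast
    then show ?thesis using lampos by simp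
  qed
qed

end

lemma fst_borel[measurable]: "fst \<in> borel_measurable (borel :: ('a::topological_space \<times> 'b::topological_space) measure)"
  by (simp add: borel_measurable_continuous_onI continuous_on_fst)
lemma snd_borel[measurable]: "snd \<in> borel_measurable (borel :: ('a::topological_space \<times> 'b::topological_space) measure)"
  by (simp add: borel_measurable_continuous_onI continuous_on_snd)

context covs begin

lemma snd_meas[measurable]: "snd \<in> borel_measurable \<rho>"
  by (simp add: measurable_cong_sets[OF rho_sets refl] borel_measurable_continuous_onI continuous_on_snd)

lemma x4_bound: "(norm (fst z))\<^sup>2 * (inner (fst z) v)\<^sup>2 \<le> (norm v)\<^sup>2 * (norm (fst z)) ^ 4"
proof -
  have "\<bar>inner (fst z) v\<bar> \<le> norm (fst z) * norm v" by (rule Cauchy_Schwarz_ineq2)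
  then have "(inner (fst z) v)\<^sup>2 \<le> (norm (fst z) * norm v)\<^sup>2"
    by (metis abs_ge_zero power2_abs power_mono)
  then have "(norm (fst z))\<^sup>2 * (inner (fst z) v)\<^sup>2 \<le> (norm (fst z))\<^sup>2 * (norm (fst z) * norm v)\<^sup>2"
    by (intro mult_left_mono) auto
  then show ?thesis by (simp add: power2_eq_square power4_eq_xxxx mult_ac)
qed

lemma int_x4: "integrable \<rho> (\<lambda>z. (norm (fst z))\<^sup>2 * (inner (fst z) v)\<^sup>2)"
proof (rule Bochner_Integration.integrable_bound[OF integrable_mult_right[OF m4, of "(norm v)\<^sup>2"]])
  show "(\<lambda>z. (norm (fst z))\<^sup>2 * (inner (fst z) v)\<^sup>2) \<in> borel_measurable \<rho>" by measurable
  show "AE z in \<rho>. norm ((norm (fst z))\<^sup>2 * (inner (fst z) v)\<^sup>2) \<le> norm ((norm v)\<^sup>2 * (norm (fst z)) ^ 4)"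
    apply (intro AE_I2)
    subgoal for z using x4_bound[of z v] by simp
    done
qed

lemma fourth_int: "integrable \<rho> (\<lambda>z. ((norm (fst z))\<^sup>2 * inner (fst z) v) *\<^sub>R fst z)"
proof (rule integrableI_bounded')
  show "(\<lambda>z. ((norm (fst z))\<^sup>2 * inner (fst z) v) *\<^sub>R fst z) \<in> borel_measurable \<rho>" by measurable
  have b: "norm (((norm (fst z))\<^sup>2 * inner (fst z) v) *\<^sub>R fst z) \<le> norm v * (norm (fst z)) ^ 4" for z
  proof -
    have "\<bar>inner (fst z) v\<bar> \<le> norm (fst z) * norm v" by (rule Cauchy_Schwarz_ineq2)
    then have "(norm (fst z))\<^sup>2 * \<bar>inner (fst z) v\<bar> * norm (fst z) \<le> (norm (fst z))\<^sup>2 * (norm (fst z) * norm v) * norm (fst z)"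
      by (intro mult_right_mono mult_left_mono) auto
    then show ?thesis by (simp add: abs_mult power2_eq_square power4_eq_xxxx mult_ac)
  qed
  have "(\<integral>\<^sup>+z. ennreal (norm (((norm (fst z))\<^sup>2 * inner (fst z) v) *\<^sub>R fst z)) \<partial>\<rho>)
      \<le> (\<integral>\<^sup>+z. ennreal (norm v * (norm (fst z)) ^ 4) \<partial>\<rho>)"
    by (intro nn_integral_mono ennreal_leI b)
  also have "\<dots> = ennreal (\<integral>z. norm v * (norm (fst z)) ^ 4 \<partial>\<rho>)"
    by (rule nn_integral_eq_integral) (use m4 in auto)
  also have "\<dots> < \<infinity>" by simp
  finally show "(\<integral>\<^sup>+z. ennreal (norm (((norm (fst z))\<^sup>2 * inner (fst z) v) *\<^sub>R fst z)) \<partial>\<rho>) < \<infinity>" .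
qed

lemma fourth_inner: "inner v (fourth_op \<rho> v) = (\<integral>z. (norm (fst z))\<^sup>2 * (inner (fst z) v)\<^sup>2 \<partial>\<rho>)"
  unfolding fourth_op_def
  by (subst integral_inner_right[symmetric]) (use fourth_int[of v] in \<open>auto simp: inner_commute power2_eq_square mult_ac\<close>)

lemma q_cont: "continuous_on UNIV q"
  unfolding q_def[abs_def]
  by (intro continuous_on_inner continuous_on_id linear_continuous_on H_bl)

lemma qj_cont: "continuous_on UNIV (qj g j)"
proof -
  have "continuous_on UNIV (q \<circ> D g j)"
    by (rule continuous_on_compose[OF linear_continuous_on[OF D_bl]]) (rule continuous_on_subset[OF q_cont], simp)
  then show ?thesis by (simp add: qj_def[abs_def] o_def)
qed

lemma qj_meas[measurable]: "qj g j \<in> borel_measurable borel"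
  by (rule borel_measurable_continuous_onI[OF qj_cont])

lemma qj_0: "qj g 0 v = q v" unfolding qj_def by simp

end

context covg begin

lemma step_int:
  assumes R: "\<And>v. inner v (fourth_op \<rho> v) \<le> R * q v"
  shows "(\<integral>\<^sup>+z. ennreal (qj g j (v - (g * inner v (fst z)) *\<^sub>R fst z)) \<partial>\<rho>)
           \<le> ennreal (qj g (Suc j) v + g * R / (2 * real j + 1) * q v)"
proof -
  interpret P: prob_space \<rho> by (rule rho_prob)
  define w where "w = D g j v"
  define p where "p = D g j (H w)"
  define c where "c = 1 / (g * (2 * real j + 1))"
  have c0: "c > 0" unfolding c_def using g_pos by simp
  let ?F = "\<lambda>z. qj g j (v - (g * inner v (fst z)) *\<^sub>R fst z)"
  have F_eq: "?F z = q w - 2 * g * (inner (fst z) v * inner (fst z) p) + g\<^sup>2 * ((inner (fst z) v)\<^sup>2 * qj g j (fst z))" for z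
  proof -
    have e0: "D g j (v - (g * inner v (fst z)) *\<^sub>R fst z) = w + (- (g * inner v (fst z))) *\<^sub>R D g j (fst z)"
      unfolding w_def by (simp add: D_diff D_scale)
    have e1: "?F z = q w + 2 * inner w (H (D g j (fst z))) * (- (g * inner v (fst z))) + q (D g j (fst z)) * (- (g * inner v (fst z)))\<^sup>2"
      unfolding qj_def e0 by (rule q_add_scale)
    have "inner w (H (D g j (fst z))) = inner (H w) (D g j (fst z))" by (rule H_sym'[symmetric])
    also have "\<dots> = inner p (fst z)" unfolding p_def by (rule D_sym[symmetric])
    finally have e2: "inner w (H (D g j (fst z))) = inner (fst z) p" by (simp add: inner_commute)
    show ?thesis unfolding e1 e2 by (simp add: qj_def power2_eq_square inner_commute algebra_simps)
  qed
  have [measurable]: "(\<lambda>z. qj g j (fst z)) \<in> borel_measurable \<rho>" by measurable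
  have i2: "integrable \<rho> (\<lambda>z. (inner (fst z) v)\<^sup>2 * qj g j (fst z))"
  proof (rule Bochner_Integration.integrable_bound[OF integrable_mult_right[OF m4, of "l * (norm v)\<^sup>2"]])
    show "(\<lambda>z. (inner (fst z) v)\<^sup>2 * qj g j (fst z)) \<in> borel_measurable \<rho>" by measurable
    show "AE z in \<rho>. norm ((inner (fst z) v)\<^sup>2 * qj g j (fst z)) \<le> norm (l * (norm v)\<^sup>2 * (norm (fst z)) ^ 4)"
    proof (intro AE_I2)
      fix z
      have "qj g j (fst z) \<le> l * (norm (fst z))\<^sup>2" using qj_le_q[of j "fst z"] qb[of "fst z"] by linarith
      then have "(inner (fst z) v)\<^sup>2 * qj g j (fst z) \<le> (inner (fst z) v)\<^sup>2 * (l * (norm (fst z))\<^sup>2)"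
        by (intro mult_left_mono) auto
      also have "\<dots> = l * ((norm (fst z))\<^sup>2 * (inner (fst z) v)\<^sup>2)" by simp
      also have "\<dots> \<le> l * ((norm v)\<^sup>2 * (norm (fst z)) ^ 4)" using x4_bound l_nonneg by (intro mult_left_mono) auto
      finally show "norm ((inner (fst z) v)\<^sup>2 * qj g j (fst z)) \<le> norm (l * (norm v)\<^sup>2 * (norm (fst z)) ^ 4)"
        using qj_nonneg[of g j "fst z"] l_nonneg by (simp add: mult_ac)
    qed
  qed
  have intF: "(\<integral>z. ?F z \<partial>\<rho>) = q w - 2 * g * inner p (H v) + g\<^sup>2 * (\<integral>z. (inner (fst z) v)\<^sup>2 * qj g j (fst z) \<partial>\<rho>)"
  proof -
    have "(\<integral>z. ?F z \<partial>\<rho>) = (\<integral>z. q w - 2 * g * (inner (fst z) v * inner (fst z) p) + g\<^sup>2 * ((inner (fst z) v)\<^sup>2 * qj g j (fst z)) \<partial>\<rho>)"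
      unfolding F_eq ..
    also have "\<dots> = q w - 2 * g * (\<integral>z. inner (fst z) v * inner (fst z) p \<partial>\<rho>) + g\<^sup>2 * (\<integral>z. (inner (fst z) v)\<^sup>2 * qj g j (fst z) \<partial>\<rho>)"
      using int_xx[of v p] i2 by (simp add: P.prob_space)
    also have "(\<integral>z. inner (fst z) v * inner (fst z) p \<partial>\<rho>) = inner p (H v)" by (simp add: inner_H)
    finally show ?thesis .
  qed
  have intF_int: "integrable \<rho> ?F"
    unfolding F_eq using int_xx[of v p] i2 by simp
  have "(\<integral>z. (inner (fst z) v)\<^sup>2 * qj g j (fst z) \<partial>\<rho>) \<le> (\<integral>z. c * ((norm (fst z))\<^sup>2 * (inner (fst z) v)\<^sup>2) \<partial>\<rho>)"
  proof (rule integral_mono[OF i2])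
    show "integrable \<rho> (\<lambda>z. c * ((norm (fst z))\<^sup>2 * (inner (fst z) v)\<^sup>2))" using int_x4 by simp
    fix z
    have "qj g j (fst z) \<le> c * (norm (fst z))\<^sup>2" using qj_bound[of j "fst z"] unfolding c_def by simp
    then have "(inner (fst z) v)\<^sup>2 * qj g j (fst z) \<le> (inner (fst z) v)\<^sup>2 * (c * (norm (fst z))\<^sup>2)"
      by (intro mult_left_mono) auto
    then show "(inner (fst z) v)\<^sup>2 * qj g j (fst z) \<le> c * ((norm (fst z))\<^sup>2 * (inner (fst z) v)\<^sup>2)"
      by (simp add: mult_ac)
  qed
  also have "\<dots> = c * inner v (fourth_op \<rho> v)" by (simp add: fourth_inner)
  also have "\<dots> \<le> c * (R * q v)" using R c0 by (intro mult_left_mono) auto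
  finally have i3: "(\<integral>z. (inner (fst z) v)\<^sup>2 * qj g j (fst z) \<partial>\<rho>) \<le> c * (R * q v)" .
  have qS: "qj g (Suc j) v = q w - 2 * g * inner p (H v) + g\<^sup>2 * q (D g j (H v))"
  proof -
    have e0: "D g (Suc j) v = w + (- g) *\<^sub>R D g j (H v)"
      unfolding w_def by (simp add: D_Suc' Aop_def D_diff D_scale)
    have "qj g (Suc j) v = q w + 2 * inner w (H (D g j (H v))) * (- g) + q (D g j (H v)) * (- g)\<^sup>2"
      unfolding qj_def e0 by (rule q_add_scale)
    moreover have "inner w (H (D g j (H v))) = inner p (H v)"
    proof -
      have "inner w (H (D g j (H v))) = inner (H w) (D g j (H v))" by (rule H_sym'[symmetric])
      also have "\<dots> = inner p (H v)" unfolding p_def by (rule D_sym[symmetric])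
      finally show ?thesis .
    qed
    ultimately show ?thesis by (simp add: algebra_simps power2_eq_square)
  qed
  have "(\<integral>z. ?F z \<partial>\<rho>) \<le> qj g (Suc j) v + g\<^sup>2 * (c * (R * q v))"
  proof -
    have "g\<^sup>2 * (\<integral>z. (inner (fst z) v)\<^sup>2 * qj g j (fst z) \<partial>\<rho>) \<le> g\<^sup>2 * (c * (R * q v))"
      using i3 by (intro mult_left_mono) auto
    moreover have "0 \<le> g\<^sup>2 * q (D g j (H v))" using q_nonneg by simp
    ultimately show ?thesis unfolding intF qS by linarith
  qed
  also have "g\<^sup>2 * (c * (R * q v)) = g * R / (2 * real j + 1) * q v"
  proof -
    have "g\<^sup>2 * (c * (R * q v)) = (g * g / (g * (2 * real j + 1))) * (R * q v)"
      unfolding c_def by (simp add: power2_eq_square)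
    also have "g * g / (g * (2 * real j + 1)) = g / (2 * real j + 1)"
      using g_pos by simp
    finally show ?thesis by simp
  qed
  finally have le: "(\<integral>z. ?F z \<partial>\<rho>) \<le> qj g (Suc j) v + g * R / (2 * real j + 1) * q v" .
  have "(\<integral>\<^sup>+z. ennreal (?F z) \<partial>\<rho>) = ennreal (\<integral>z. ?F z \<partial>\<rho>)"
    by (rule nn_integral_eq_integral[OF intF_int]) (simp add: qj_nonneg)
  also have "\<dots> \<le> ennreal (qj g (Suc j) v + g * R / (2 * real j + 1) * q v)"
    by (rule ennreal_leI[OF le])
  finally show ?thesis .
qed

end

primrec eta :: "real \<Rightarrow> 'a::real_inner \<Rightarrow> (nat \<Rightarrow> 'a \<times> real) \<Rightarrow> nat \<Rightarrow> 'a" where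
  "eta g th zs 0 = - th"
| "eta g th zs (Suc t) = eta g th zs t - (g * inner (eta g th zs t) (fst (zs t))) *\<^sub>R fst (zs t)"

lemma sgd_eta:
  assumes "\<And>i. snd (zs i) = inner th (fst (zs i))"
  shows "sgd g zs t - th = eta g th zs t"
  by (induction t) (simp_all add: assms inner_diff_left algebra_simps)

lemma eta_cong: "(\<And>i. i < t \<Longrightarrow> zs i = zs' i) \<Longrightarrow> eta g th zs t = eta g th zs' t"
  by (induction t) auto

lemma eta_meas_Pi:
  fixes th :: "'a::{real_inner,second_countable_topology}"
  shows "{..<t} \<subseteq> I \<Longrightarrow> (\<lambda>f. eta g th f t) \<in> borel_measurable (PiM I (\<lambda>_. (borel :: ('a \<times> real) measure)))"
proof (induction t)
  case 0 then show ?case by simp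
next
  case (Suc t)
  have sub: "{..<t} \<subseteq> I" and tI: "t \<in> I" using Suc.prems by auto
  have IH[measurable]: "(\<lambda>f. eta g th f t) \<in> borel_measurable (PiM I (\<lambda>_. (borel :: ('a \<times> real) measure)))"
    by (rule Suc.IH[OF sub])
  have [measurable]: "(\<lambda>f. f t) \<in> measurable (PiM I (\<lambda>_. borel)) (borel :: ('a \<times> real) measure)"
    by (rule measurable_component_singleton[OF tI, where M="\<lambda>_. borel"])
  show ?case unfolding eta.simps by measurable
qed

lemma eta_meas:
  fixes th :: "'a::{real_inner,second_countable_topology}"
  assumes zm[measurable]: "\<And>i. z i \<in> measurable M (borel :: ('a \<times> real) measure)"
  shows "(\<lambda>\<omega>. eta g th (\<lambda>i. z i \<omega>) t) \<in> borel_measurable M"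
proof (induction t)
  case 0 then show ?case by simp
next
  case (Suc t)
  note [measurable] = Suc
  show ?case unfolding eta.simps by measurable
qed

lemma sgd_meas:
  fixes z :: "nat \<Rightarrow> 'm \<Rightarrow> 'a::{real_inner,second_countable_topology} \<times> real"
  assumes zm[measurable]: "\<And>i. z i \<in> measurable M borel"
  shows "(\<lambda>\<omega>. sgd g (\<lambda>i. z i \<omega>) t) \<in> borel_measurable M"
proof (induction t)
  case 0 then show ?case by simp
next
  case (Suc t)
  note [measurable] = Suc
  show ?case unfolding sgd.simps by measurable
qed

lemma indep_eta:
  fixes z :: "nat \<Rightarrow> 'm \<Rightarrow> 'a::{real_inner,second_countable_topology} \<times> real"
  assumes P: "prob_space M" and ind: "prob_space.indep_vars M (\<lambda>_. borel) z UNIV"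
  shows "prob_space.indep_var M borel (\<lambda>\<omega>. (eta g th (\<lambda>i. z i \<omega>) t, 0::real)) borel (z t)"
proof -
  interpret prob_space M by (rule P)
  define K where "K = (\<lambda>b::bool. if b then {..<t} else {t})"
  have ind': "indep_vars (\<lambda>b. PiM (K b) (\<lambda>_. borel)) (\<lambda>b \<omega>. restrict (\<lambda>i. z i \<omega>) (K b)) UNIV"
    using ind by (rule indep_vars_restrict) (auto simp: K_def disjoint_family_on_def)
  have eq1: "case_bool (PiM {..<t} (\<lambda>_. borel)) (PiM {t} (\<lambda>_. borel)) = (\<lambda>b. PiM (K b) (\<lambda>_::nat. borel::('a\<times>real) measure))"
    by (auto simp: K_def fun_eq_iff split: bool.split)
  have eq2: "case_bool (\<lambda>\<omega>. restrict (\<lambda>i. z i \<omega>) {..<t}) (\<lambda>\<omega>. restrict (\<lambda>i. z i \<omega>) {t}) = (\<lambda>b \<omega>. restrict (\<lambda>i. z i \<omega>) (K b))"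
    by (auto simp: K_def fun_eq_iff split: bool.split)
  have iv: "indep_var (PiM {..<t} (\<lambda>_. borel)) (\<lambda>\<omega>. restrict (\<lambda>i. z i \<omega>) {..<t}) (PiM {t} (\<lambda>_. borel)) (\<lambda>\<omega>. restrict (\<lambda>i. z i \<omega>) {t})"
    unfolding indep_var_def eq1 eq2 by (rule ind')
  have m0[measurable]: "(\<lambda>f. eta g th f t) \<in> borel_measurable (PiM {..<t} (\<lambda>_. (borel :: ('a \<times> real) measure)))"
    by (rule eta_meas_Pi) simp
  have m1: "(\<lambda>f. (eta g th f t, 0::real)) \<in> measurable (PiM {..<t} (\<lambda>_. (borel :: ('a \<times> real) measure))) borel"
    by measurable
  have m2: "(\<lambda>f. f t) \<in> measurable (PiM {t} (\<lambda>_. borel)) (borel :: ('a \<times> real) measure)"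
    using measurable_component_singleton[of t "{t}" "\<lambda>_. borel"] by simp
  have "indep_var borel ((\<lambda>f. (eta g th f t, 0::real)) \<circ> (\<lambda>\<omega>. restrict (\<lambda>i. z i \<omega>) {..<t})) borel ((\<lambda>f. f t) \<circ> (\<lambda>\<omega>. restrict (\<lambda>i. z i \<omega>) {t}))"
    by (rule indep_var_compose[OF iv m1 m2])
  moreover have "((\<lambda>f. (eta g th f t, 0::real)) \<circ> (\<lambda>\<omega>. restrict (\<lambda>i. z i \<omega>) {..<t})) = (\<lambda>\<omega>. (eta g th (\<lambda>i. z i \<omega>) t, 0::real))"
    by (auto simp: fun_eq_iff intro!: eta_cong)
  moreover have "((\<lambda>f. f t) \<circ> (\<lambda>\<omega>. restrict (\<lambda>i. z i \<omega>) {t})) = z t" by (auto simp: fun_eq_iff)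
  ultimately show ?thesis by simp
qed

theorem lemma2:
  fixes \<rho> :: "('a::{real_inner,second_countable_topology,complete_space} \<times> real) measure"
    and M :: "'m measure"
    and z :: "nat \<Rightarrow> 'm \<Rightarrow> 'a \<times> real"
    and \<theta>s :: 'a and R \<gamma> lmax :: real and t :: nat
  assumes rho_prob: "prob_space \<rho>"
    and rho_sets: "sets \<rho> = sets borel"
    and second_moment: "integrable \<rho> (\<lambda>w. (norm (fst w))\<^sup>2)"
    and fourth_moment: "integrable \<rho> (\<lambda>w. (norm (fst w)) ^ 4)"
    and lmax: "largest_eigenvalue (cov_op \<rho>) lmax"
    and realizable: "AE w in \<rho>. inner \<theta>s (fst w) = snd w"
    and R_nonneg: "R \<ge> 0"
    and fourth: "loewner_le (fourth_op \<rho>) (\<lambda>v. R *\<^sub>R cov_op \<rho> v)"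
    and M_prob: "prob_space M"
    and iid_indep: "prob_space.indep_vars M (\<lambda>_. borel) z UNIV"
    and iid_distr: "\<And>i. distr M borel (z i) = \<rho>"
    and gamma_pos: "\<gamma> > 0"
    and gamma_le: "\<gamma> * (4 * lmax) \<le> 1"
    and t_ge: "t \<ge> 1"
  shows "(let f = (\<lambda>k. prob_space.expectation M (\<lambda>\<omega>. risk \<rho> (sgd \<gamma> (\<lambda>i. z i \<omega>) k))) in
           f t \<le> (norm \<theta>s)\<^sup>2 / (4 * \<gamma> * real t)
                   + \<gamma> * R * (\<Sum>k<t. f k / (real t - real k)))"
proof -
  have cv: "covs \<rho>" using rho_prob rho_sets second_moment fourth_moment by (simp add: covs_def)
  interpret covs \<rho> by (rule cv)
  interpret PM: prob_space M by (rule M_prob)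
  have lmax': "largest_eigenvalue H lmax" using lmax unfolding H_def .
  have qb: "\<And>v. q v \<le> lmax * (norm v)\<^sup>2" using q_le_eig(1)[OF lmax'] .
  have l0: "0 \<le> lmax" using q_le_eig(2)[OF lmax'] .
  have "0 \<le> \<gamma> * lmax" using gamma_pos l0 by simp
  moreover have "\<gamma> * (4 * lmax) = 4 * (\<gamma> * lmax)" by simp
  ultimately have gl: "\<gamma> * lmax \<le> 1" using gamma_le by linarith
  interpret G: covg \<rho> \<gamma> lmax
    by (rule covg.intro[OF cv]) (simp add: covg_axioms_def gamma_pos qb gl l0)
  have R4: "\<And>v. inner v (fourth_op \<rho> v) \<le> R * q v"
    using fourth unfolding loewner_le_def q_def H_def by simp
  have zm[measurable]: "\<And>i. z i \<in> measurable M borel"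
    using iid_indep unfolding PM.indep_vars_def by auto
  note qj_meas[measurable]
  have q_meas[measurable]: "q \<in> borel_measurable borel" by (rule borel_measurable_continuous_onI[OF q_cont])
  have real_M: "AE \<omega> in M. \<forall>i. snd (z i \<omega>) = inner \<theta>s (fst (z i \<omega>))"
    unfolding AE_all_countable
  proof
    fix i
    have S: "{w \<in> space (borel::('a\<times>real) measure). inner \<theta>s (fst w) = snd w} \<in> sets borel" by measurable
    have A: "AE w in distr M borel (z i). inner \<theta>s (fst w) = snd w" unfolding iid_distr[of i] by (rule realizable)
    have "AE \<omega> in M. inner \<theta>s (fst (z i \<omega>)) = snd (z i \<omega>)" using A by (simp add: AE_distr_iff[OF zm S])
    then show "AE \<omega> in M. snd (z i \<omega>) = inner \<theta>s (fst (z i \<omega>))" by eventually_elim simp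
  qed
  define et where "et t \<omega> = eta \<gamma> \<theta>s (\<lambda>i. z i \<omega>) t" for t \<omega>
  have et_meas[measurable]: "et s \<in> borel_measurable M" for s unfolding et_def by (rule eta_meas[OF zm])
  have sgdm[measurable]: "(\<lambda>\<omega>. sgd \<gamma> (\<lambda>i. z i \<omega>) k) \<in> borel_measurable M" for k by (rule sgd_meas[OF zm])
  have risk_q: "risk \<rho> \<theta> = q (\<theta> - \<theta>s) / 2" for \<theta>
  proof -
    have "(\<integral>w. (inner \<theta> (fst w) - snd w)\<^sup>2 \<partial>\<rho>) = (\<integral>w. (inner (fst w) (\<theta> - \<theta>s))\<^sup>2 \<partial>\<rho>)"
    proof (rule integral_cong_AE)
      show "(\<lambda>w. (inner \<theta> (fst w) - snd w)\<^sup>2) \<in> borel_measurable \<rho>" by measurable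
      show "(\<lambda>w. (inner (fst w) (\<theta> - \<theta>s))\<^sup>2) \<in> borel_measurable \<rho>" by measurable
      show "AE w in \<rho>. (inner \<theta> (fst w) - snd w)\<^sup>2 = (inner (fst w) (\<theta> - \<theta>s))\<^sup>2"
        using realizable
      proof eventually_elim
        case (elim w)
        have "inner (fst w) (\<theta> - \<theta>s) = inner \<theta> (fst w) - inner \<theta>s (fst w)"
          by (simp add: inner_diff_right inner_commute)
        then show ?case using elim by simp
      qed
    qed
    then show ?thesis unfolding risk_def q_int by simp
  qed
  define GG where "GG s j = (\<integral>\<^sup>+\<omega>. ennreal (qj \<gamma> j (et s \<omega>)) \<partial>M)" for s j
  define gk where "gk s = enn2real (GG s 0)" for s
  have f_eq: "PM.expectation (\<lambda>\<omega>. risk \<rho> (sgd \<gamma> (\<lambda>i. z i \<omega>) k)) = gk k / 2" for k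
  proof -
    have "PM.expectation (\<lambda>\<omega>. risk \<rho> (sgd \<gamma> (\<lambda>i. z i \<omega>) k)) = PM.expectation (\<lambda>\<omega>. q (et k \<omega>) / 2)"
    proof (rule integral_cong_AE)
      show "(\<lambda>\<omega>. risk \<rho> (sgd \<gamma> (\<lambda>i. z i \<omega>) k)) \<in> borel_measurable M" unfolding risk_q by measurable
      show "(\<lambda>\<omega>. q (et k \<omega>) / 2) \<in> borel_measurable M" by measurable
      show "AE \<omega> in M. risk \<rho> (sgd \<gamma> (\<lambda>i. z i \<omega>) k) = q (et k \<omega>) / 2"
        using real_M
      proof eventually_elim
        case (elim \<omega>)
        have "sgd \<gamma> (\<lambda>i. z i \<omega>) k - \<theta>s = eta \<gamma> \<theta>s (\<lambda>i. z i \<omega>) k"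
          by (rule sgd_eta) (use elim in auto)
        then show ?case unfolding risk_q et_def by simp
      qed
    qed
    also have "\<dots> = PM.expectation (\<lambda>\<omega>. q (et k \<omega>)) / 2" by simp
    also have "PM.expectation (\<lambda>\<omega>. q (et k \<omega>)) = gk k"
      unfolding gk_def GG_def qj_0 by (rule integral_eq_nn_integral) (auto simp: q_nonneg)
    finally show ?thesis .
  qed
  have indep: "PM.indep_var borel (\<lambda>\<omega>. (et s \<omega>, 0::real)) borel (z s)" for s
    unfolding et_def by (rule indep_eta[OF M_prob iid_indep])
  have rec: "GG (Suc s) j \<le> GG s (Suc j) + ennreal (\<gamma> * R / (2 * real j + 1)) * GG s 0" for s j
  proof -
    let ?X = "\<lambda>\<omega>. (et s \<omega>, 0::real)"
    let ?\<nu> = "distr M borel ?X"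
    have Xm[measurable]: "?X \<in> measurable M borel" by measurable
    from indep[of s] have dist: "?\<nu> \<Otimes>\<^sub>M distr M borel (z s) = distr M (borel \<Otimes>\<^sub>M borel) (\<lambda>\<omega>. (?X \<omega>, z s \<omega>))"
      unfolding PM.indep_var_distribution_eq by blast
    define F where "F p = ennreal (qj \<gamma> j (fst (fst p) - (\<gamma> * inner (fst (fst p)) (fst (snd p))) *\<^sub>R fst (snd p)))"
      for p :: "('a \<times> real) \<times> ('a \<times> real)"
    have Fm[measurable]: "F \<in> borel_measurable (borel \<Otimes>\<^sub>M borel)" unfolding F_def by measurable
    have "GG (Suc s) j = (\<integral>\<^sup>+\<omega>. F (?X \<omega>, z s \<omega>) \<partial>M)"
      unfolding GG_def F_def et_def by simp
    also have "\<dots> = (\<integral>\<^sup>+p. F p \<partial>(distr M (borel \<Otimes>\<^sub>M borel) (\<lambda>\<omega>. (?X \<omega>, z s \<omega>))))"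
      by (rule nn_integral_distr[symmetric]) measurable
    also have "\<dots> = (\<integral>\<^sup>+p. F p \<partial>(?\<nu> \<Otimes>\<^sub>M \<rho>))" unfolding dist[symmetric] iid_distr ..
    also have "\<dots> = (\<integral>\<^sup>+a. \<integral>\<^sup>+w. F (a, w) \<partial>\<rho> \<partial>?\<nu>)"
    proof (rule sigma_finite_measure.nn_integral_fst[symmetric])
      show "sigma_finite_measure \<rho>" by (rule prob_space_imp_sigma_finite[OF rho_prob])
      have "sets (?\<nu> \<Otimes>\<^sub>M \<rho>) = sets (borel \<Otimes>\<^sub>M borel)"
        by (rule sets_pair_measure_cong) (simp_all add: rho_sets)
      then show "F \<in> borel_measurable (?\<nu> \<Otimes>\<^sub>M \<rho>)" using Fm by (subst measurable_cong_sets[OF _ refl])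
    qed
    also have "\<dots> \<le> (\<integral>\<^sup>+a. ennreal (qj \<gamma> (Suc j) (fst a) + \<gamma> * R / (2 * real j + 1) * q (fst a)) \<partial>?\<nu>)"
    proof (intro nn_integral_mono)
      fix a :: "'a \<times> real"
      show "(\<integral>\<^sup>+w. F (a, w) \<partial>\<rho>) \<le> ennreal (qj \<gamma> (Suc j) (fst a) + \<gamma> * R / (2 * real j + 1) * q (fst a))"
        unfolding F_def using G.step_int[OF R4, of j "fst a"] by simp
    qed
    also have "\<dots> = (\<integral>\<^sup>+\<omega>. ennreal (qj \<gamma> (Suc j) (et s \<omega>) + \<gamma> * R / (2 * real j + 1) * q (et s \<omega>)) \<partial>M)"
      apply (subst nn_integral_distr)
        apply (rule Xm)
       apply (subst measurable_cong_sets[OF sets_distr refl])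
       apply (rule measurable_compose[OF fst_borel])
       apply measurable
      done
    also have "\<dots> = GG s (Suc j) + ennreal (\<gamma> * R / (2 * real j + 1)) * GG s 0"
    proof -
      have c0: "0 \<le> \<gamma> * R / (2 * real j + 1)" using gamma_pos R_nonneg by simp
      have "(\<integral>\<^sup>+\<omega>. ennreal (qj \<gamma> (Suc j) (et s \<omega>) + \<gamma> * R / (2 * real j + 1) * q (et s \<omega>)) \<partial>M)
          = (\<integral>\<^sup>+\<omega>. ennreal (qj \<gamma> (Suc j) (et s \<omega>)) + ennreal (\<gamma> * R / (2 * real j + 1)) * ennreal (q (et s \<omega>)) \<partial>M)"
      proof (intro nn_integral_cong)
        fix x
        have a0: "0 \<le> qj \<gamma> (Suc j) (et s x)" by (rule qj_nonneg)
        have b0: "0 \<le> q (et s x)" by (rule q_nonneg)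
        show "ennreal (qj \<gamma> (Suc j) (et s x) + \<gamma> * R / (2 * real j + 1) * q (et s x))
            = ennreal (qj \<gamma> (Suc j) (et s x)) + ennreal (\<gamma> * R / (2 * real j + 1)) * ennreal (q (et s x))"
          by (simp only: ennreal_plus[OF a0 mult_nonneg_nonneg[OF c0 b0]] ennreal_mult[OF c0 b0])
      qed
      also have "\<dots> = GG s (Suc j) + ennreal (\<gamma> * R / (2 * real j + 1)) * GG s 0"
        unfolding GG_def qj_0 by (simp add: nn_integral_add nn_integral_cmult)
      finally show ?thesis .
    qed
    finally show ?thesis .
  qed
  have unroll: "GG s j \<le> ennreal (qj \<gamma> (s + j) (- \<theta>s)) + (\<Sum>k<s. ennreal (\<gamma> * R / (2 * real (s - 1 - k + j) + 1)) * GG k 0)" for s j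
  proof (induction s arbitrary: j)
    case 0
    show ?case unfolding GG_def et_def by (simp add: PM.emeasure_space_1)
  next
    case (Suc s)
    have "GG (Suc s) j \<le> GG s (Suc j) + ennreal (\<gamma> * R / (2 * real j + 1)) * GG s 0" by (rule rec)
    also have "\<dots> \<le> (ennreal (qj \<gamma> (s + Suc j) (- \<theta>s)) + (\<Sum>k<s. ennreal (\<gamma> * R / (2 * real (s - 1 - k + Suc j) + 1)) * GG k 0))
        + ennreal (\<gamma> * R / (2 * real j + 1)) * GG s 0"
      by (rule add_mono[OF Suc.IH order_refl])
    also have "\<dots> = ennreal (qj \<gamma> (Suc s + j) (- \<theta>s)) + (\<Sum>k<Suc s. ennreal (\<gamma> * R / (2 * real (Suc s - 1 - k + j) + 1)) * GG k 0)"
    proof -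
      have "(\<Sum>k<s. ennreal (\<gamma> * R / (2 * real (s - 1 - k + Suc j) + 1)) * GG k 0)
          = (\<Sum>k<s. ennreal (\<gamma> * R / (2 * real (Suc s - 1 - k + j) + 1)) * GG k 0)"
      proof (intro sum.cong refl)
        fix k assume "k \<in> {..<s}"
        then have e: "s - 1 - k + Suc j = Suc s - 1 - k + j" by auto
        show "ennreal (\<gamma> * R / (2 * real (s - 1 - k + Suc j) + 1)) * GG k 0
            = ennreal (\<gamma> * R / (2 * real (Suc s - 1 - k + j) + 1)) * GG k 0" by (simp only: e)
      qed
      then show ?thesis by (simp add: add_ac)
    qed
    finally show ?case .
  qed
  have Gfin: "GG s 0 < \<top>" for s
  proof (induction s rule: less_induct)
    case (less s)
    have "GG s 0 \<le> ennreal (qj \<gamma> (s + 0) (- \<theta>s)) + (\<Sum>k<s. ennreal (\<gamma> * R / (2 * real (s - 1 - k + 0) + 1)) * GG k 0)"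
      by (rule unroll)
    also have "\<dots> < \<top>" using less by (simp add: ennreal_mult_less_top)
    finally show ?case .
  qed
  have Geq: "GG s 0 = ennreal (gk s)" for s unfolding gk_def using Gfin[of s] by simp
  have gk0: "0 \<le> gk s" for s unfolding gk_def by simp
  define c where "c k = \<gamma> * R / (2 * real (t - 1 - k) + 1)" for k
  have c_nn: "0 \<le> c k" for k unfolding c_def using gamma_pos R_nonneg by simp
  have "ennreal (gk t) \<le> ennreal (qj \<gamma> t (- \<theta>s)) + (\<Sum>k<t. ennreal (c k) * ennreal (gk k))"
    using unroll[of t 0] by (simp add: Geq c_def)
  also have "(\<Sum>k<t. ennreal (c k) * ennreal (gk k)) = ennreal (\<Sum>k<t. c k * gk k)"
  proof -
    have "(\<Sum>k<t. ennreal (c k) * ennreal (gk k)) = (\<Sum>k<t. ennreal (c k * gk k))"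
      by (intro sum.cong refl) (simp add: ennreal_mult c_nn gk0)
    also have "\<dots> = ennreal (\<Sum>k<t. c k * gk k)" using c_nn gk0 by (intro sum_ennreal) simp
    finally show ?thesis .
  qed
  also have "ennreal (qj \<gamma> t (- \<theta>s)) + ennreal (\<Sum>k<t. c k * gk k) = ennreal (qj \<gamma> t (- \<theta>s) + (\<Sum>k<t. c k * gk k))"
    using c_nn gk0 qj_nonneg by (intro ennreal_plus[symmetric]) (auto intro: sum_nonneg)
  finally have gt: "gk t \<le> qj \<gamma> t (- \<theta>s) + (\<Sum>k<t. c k * gk k)"
    using c_nn gk0 qj_nonneg by (subst (asm) ennreal_le_iff) (auto intro!: add_nonneg_nonneg sum_nonneg)
  have t0: "real t > 0" using t_ge by simp
  have b1: "qj \<gamma> t (- \<theta>s) / 2 \<le> (norm \<theta>s)\<^sup>2 / (4 * \<gamma> * real t)"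
  proof -
    have "qj \<gamma> t (- \<theta>s) \<le> (norm \<theta>s)\<^sup>2 / (\<gamma> * (2 * real t + 1))" using G.qj_bound[of t "- \<theta>s"] by simp
    also have "\<dots> \<le> (norm \<theta>s)\<^sup>2 / (\<gamma> * (2 * real t))"
      by (intro divide_left_mono) (use gamma_pos t0 in auto)
    also have "\<dots> = 2 * ((norm \<theta>s)\<^sup>2 / (4 * \<gamma> * real t))" using gamma_pos t0 by (simp add: field_simps)
    finally show ?thesis by simp
  qed
  have b2: "c k * gk k / 2 \<le> \<gamma> * R * (gk k / 2 / (real t - real k))" if "k < t" for k
  proof -
    have pos: "0 < real t - real k" using that by simp
    have "real (t - 1 - k) = real t - real k - 1" using that by (simp add: of_nat_diff)
    then have le: "real t - real k \<le> 2 * real (t - 1 - k) + 1" using that by simp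
    have ineq: "\<gamma> * R * (gk k / 2) / (2 * real (t - 1 - k) + 1) \<le> \<gamma> * R * (gk k / 2) / (real t - real k)"
      by (intro divide_left_mono le) (use pos gamma_pos R_nonneg gk0 in auto)
    have eqA: "c k * gk k / 2 = \<gamma> * R * (gk k / 2) / (2 * real (t - 1 - k) + 1)" unfolding c_def by simp
    have eqB: "\<gamma> * R * (gk k / 2 / (real t - real k)) = \<gamma> * R * (gk k / 2) / (real t - real k)" by simp
    show ?thesis unfolding eqA eqB by (rule ineq)
  qed
  have "gk t / 2 \<le> qj \<gamma> t (- \<theta>s) / 2 + (\<Sum>k<t. c k * gk k / 2)"
    using gt by (simp add: sum_divide_distrib[symmetric])
  also have "\<dots> \<le> (norm \<theta>s)\<^sup>2 / (4 * \<gamma> * real t) + (\<Sum>k<t. \<gamma> * R * (gk k / 2 / (real t - real k)))"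
    by (intro add_mono b1 sum_mono b2) auto
  also have "\<dots> = (norm \<theta>s)\<^sup>2 / (4 * \<gamma> * real t) + \<gamma> * R * (\<Sum>k<t. gk k / 2 / (real t - real k))"
    by (simp add: sum_distrib_left)
  finally show ?thesis unfolding Let_def f_eq .
qed


end
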